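(* For every integer $n\geq 2$, the sequence $a_k=k^n/k!$, $k=1,2,\ldots$, is unimodal and has a unique maximizer, which is either $k=\lfloor e^{w(n)}\rfloor$ or $k=\lfloor e^{w(n)}\rfloor+1$.
   Context: $w(n)$ denotes Lambert's W function, i.e. the unique real $w>0$ with $n=we^{w}$. $\lfloor x\rfloor$ is the integer part of $x$. A sequence is unimodal if it is weakly increasing up to some index and weakly decreasing afterwards. *)

theory Defs
  imports Complex_Main
begin

definition lambertW :: "real \<Rightarrow> real" where
  "lambertW x = (THE w. w > 0 \<and> x = w * exp w)"

definition unimodal_seq :: "(nat \<Rightarrow> real) \<Rightarrow> bool" where
  "unimodal_seq a \<longleftrightarrow> (\<exists>m\<ge>1.
      (\<forall>i j. 1 \<le> i \<and> i \<le> j \<and> j \<le> m \<longrightarrow> a i \<le> a j) \<and>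
      (\<forall>i j. m \<le> i \<and> i \<le> j \<longrightarrow> a j \<le> a i))"

end

theory Submission
  imports Defs
begin

lemma ln_lt_minus_one: fixes y::real assumes "0 < y" "y \<noteq> 1" shows "ln y < y - 1"
proof -
  have s: "sqrt y > 0" "sqrt y \<noteq> 1" using assms by auto
  have "ln y = 2 * ln (sqrt y)" using assms by (simp add: ln_sqrt)
  also have "\<dots> \<le> 2 * (sqrt y - 1)" using ln_le_minus_one[OF s(1)] by simp
  also have "\<dots> < y - 1"
  proof -
    have "(sqrt y - 1)^2 > 0" using s by simp
    moreover have "(sqrt y)^2 = y" using assms by simp
    ultimately show ?thesis by (simp add: power2_eq_square algebra_simps)
  qed
  finally show ?thesis .
qed

lemma c: "isCont (\<lambda>w::real. w * exp w) t"
  by (intro isCont_mult isCont_exp continuous_ident)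
lemma lam_exists: assumes "(y::real) > 0" shows "lambertW y > 0 \<and> y = lambertW y * exp (lambertW y)"
proof -
  have a2: "y \<le> y * exp y" using assms by simp
  have "\<forall>x. 0 \<le> x \<and> x \<le> y \<longrightarrow> isCont (\<lambda>w::real. w * exp w) x" using c by blast
  from IVT[of "\<lambda>w::real. w * exp w" 0 y y, OF _ _ _ this]
  have "\<exists>w. 0 \<le> w \<and> w \<le> y \<and> w * exp w = y" using assms a2 by simp
  then obtain w where w: "0 \<le> w" "y = w * exp w" by auto
  have wp: "w > 0"
  proof (rule ccontr)
    assume "\<not> w > 0" then have "w = 0" using w by simp
    then show False using w assms by simp
  qed
  have uniq: "v = w" if "v > 0" "y = v * exp v" for v
  proof (rule ccontr)
    assume "v \<noteq> w"
    then consider "v < w" | "w < v" by linarith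
    then show False
    proof cases
      case 1 then have "v * exp v < w * exp w" using that by (intro mult_strict_mono) auto
      then show False using that w by simp
    next
      case 2 then have "w * exp w < v * exp v" using wp by (intro mult_strict_mono) auto
      then show False using that w by simp
    qed
  qed
  have "lambertW y = w" unfolding lambertW_def
  proof (rule the_equality)
    show "w > 0 \<and> y = w * exp w" using wp w by simp
    show "\<And>v. v > 0 \<and> y = v * exp v \<Longrightarrow> v = w" using uniq by blast
  qed
  then show ?thesis using wp w by simp
qed

lemma up:
  fixes k n :: nat and w x :: real
  assumes n2: "n \<ge> 2" and k1: "1 \<le> k" and kx: "real k \<le> x - 1" and xw: "x = exp w"
    and nw: "real n = w * x"
  shows "real k ^ n < real (k+1) ^ (n-1)"
proof -
  have xpos: "x > 0" using xw by simp
  have kpos: "real k > 0" using k1 by simp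
  have x1: "x - 1 > 0" using kx kpos by linarith
  have h1: "ln (real k + 1) - ln (real k) > 1 / (real k + 1)"
  proof -
    have "ln (real k / (real k + 1)) < real k / (real k + 1) - 1"
      using kpos by (intro ln_lt_minus_one) auto
    moreover have "ln (real k / (real k + 1)) = ln (real k) - ln (real k + 1)"
      using kpos by (simp add: ln_div)
    moreover have "real k / (real k + 1) - 1 = - 1 / (real k + 1)"
      using kpos by (simp add: field_simps)
    ultimately show ?thesis by simp
  qed
  have nm1: "real (n-1) = real n - 1" using n2 by simp
  have nm1pos: "real n - 1 > 0" using n2 by simp
  have h2: "(real n - 1) / (real k + 1) \<ge> (real n - 1) / x"
    using kx nm1pos kpos by (intro divide_left_mono) auto
  have h3: "(real n - 1) / x = w - 1 / x" using nw xpos by (simp add: field_simps)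
  have h4: "w - 1 / x \<ge> ln (x - 1)"
  proof -
    have "ln ((x-1)/x) \<le> (x-1)/x - 1" using x1 xpos by (intro ln_le_minus_one) auto
    moreover have "ln ((x-1)/x) = ln (x-1) - w" using x1 xpos xw by (simp add: ln_div)
    moreover have "(x-1)/x - 1 = - 1/x" using xpos by (simp add: field_simps)
    ultimately show ?thesis by simp
  qed
  have h5: "ln (x - 1) \<ge> ln (real k)" using kx kpos by simp
  have "(real n - 1) * (ln (real k + 1) - ln (real k)) > (real n - 1) * (1 / (real k + 1))"
    using h1 nm1pos by (intro mult_strict_left_mono) auto
  hence key: "real n * ln (real k) < (real n - 1) * ln (real k + 1)"
    using h2 h3 h4 h5 by (simp add: algebra_simps)
  have "ln (real k ^ n) < ln (real (k+1) ^ (n-1))"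
    using key kpos by (subst ln_realpow, subst ln_realpow, subst nm1, simp add: add.commute)
  then show ?thesis using kpos by (simp add: ln_less_cancel_iff)
qed

lemma down:
  fixes k n :: nat and w x :: real
  assumes n2: "n \<ge> 2" and kx: "real k \<ge> x" and xw: "x = exp w"
    and nw: "real n = w * x" and wpos: "w > 0"
  shows "real (k+1) ^ (n-1) < real k ^ n"
proof -
  have xpos: "x > 0" using xw by simp
  have kpos: "real k > 0" using kx xpos by linarith
  have h1: "ln (real k + 1) - ln (real k) < 1 / real k"
  proof -
    have "ln (1 + 1 / real k) < 1 / real k" using kpos by (intro ln_add_one_self_less_self) auto
    moreover have "1 + 1 / real k = (real k + 1) / real k" using kpos by (simp add: field_simps)
    ultimately show ?thesis using kpos by (simp add: ln_div)
  qed
  have nm1: "real (n-1) = real n - 1" using n2 by simp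
  have nm1pos: "real n - 1 > 0" using n2 by simp
  have h2: "(real n - 1) / real k \<le> (real n - 1) / x"
    using kx nm1pos xpos by (intro divide_left_mono) auto
  have h3: "(real n - 1) / x < real n / x" using xpos by (simp add: divide_strict_right_mono)
  have h4: "real n / x = w" using nw xpos by simp
  have h5': "ln x \<le> ln (real k)" using kx xpos by simp
  have h5: "w \<le> ln (real k)" using h5' xw by simp
  have "(real n - 1) * (ln (real k + 1) - ln (real k)) < (real n - 1) * (1 / real k)"
    using h1 nm1pos by (intro mult_strict_left_mono) auto
  hence key: "(real n - 1) * ln (real k + 1) < real n * ln (real k)"
    using h2 h3 h4 h5 by (simp add: algebra_simps)
  have "ln (real (k+1) ^ (n-1)) < ln (real k ^ n)"
    using key kpos by (subst ln_realpow, subst ln_realpow, subst nm1, simp add: add.commute)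
  then show ?thesis using kpos by (simp add: ln_less_cancel_iff)
qed


lemma inc_seq: fixes a :: "nat \<Rightarrow> real"
  assumes h: "\<forall>k. 1 \<le> k \<and> k < m \<longrightarrow> a k < a (Suc k)" and i1: "1 \<le> i"
  shows "i + Suc d \<le> m \<Longrightarrow> a i < a (i + Suc d)"
proof (induction d)
  case 0 then show ?case using h[rule_format, of i] i1 by simp
next
  case (Suc d)
  then have "a i < a (i + Suc d)" by simp
  also have "a (i + Suc d) < a (Suc (i + Suc d))" using h[rule_format, of "i + Suc d"] i1 Suc.prems by simp
  finally show ?case by simp
qed

lemma dec_seq: fixes a :: "nat \<Rightarrow> real"
  assumes h: "\<forall>k\<ge>m. a (Suc k) < a k" and i1: "m \<le> i"
  shows "a (i + Suc d) < a i"
proof (induction d)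
  case 0 then show ?case using h[rule_format, of i] i1 by simp
next
  case (Suc d)
  have "a (Suc (i + Suc d)) < a (i + Suc d)" using h[rule_format, of "i + Suc d"] i1 by simp
  also have "\<dots> < a i" using Suc by simp
  finally show ?case by simp
qed

lemma neq_pow: fixes k n :: nat assumes "k \<ge> 1" "n \<ge> 2"
  shows "real k ^ n \<noteq> real (k+1) ^ (n-1)"
proof
  assume "real k ^ n = real (k+1) ^ (n-1)"
  hence e: "k ^ n = (k+1) ^ (n-1)" by (metis of_nat_eq_iff of_nat_power)
  have "coprime k (k+1)" by simp
  hence "coprime (k ^ n) ((k+1) ^ (n-1))" by simp
  hence "coprime (k ^ n) (k ^ n)" using e by simp
  hence "k ^ n = 1" by simp
  hence "k = 1" using assms by simp
  then have "(1::nat) = 2 ^ (n-1)" using e by (simp add: numeral_2_eq_2)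
  moreover have "1 < (2::nat) ^ (n-1)" using assms by (intro one_less_power) auto
  ultimately show False by linarith
qed


theorem proposition2:
  fixes n :: nat
  assumes "n \<ge> 2"
  defines "a \<equiv> (\<lambda>k::nat. real k ^ n / fact k)"
  shows "unimodal_seq a \<and>
         (\<exists>k\<ge>1. (\<forall>j\<ge>1. j \<noteq> k \<longrightarrow> a j < a k) \<and>
                 (int k = \<lfloor>exp (lambertW (real n))\<rfloor> \<or>
                  int k = \<lfloor>exp (lambertW (real n))\<rfloor> + 1))"
proof -
  define w where "w = lambertW (real n)"
  define x where "x = exp w"
  have wn: "w > 0" "real n = w * x" using lam_exists[of "real n"] assms(1)
    unfolding w_def x_def by auto
  have x1: "x > 1" using wn unfolding x_def by simp
  define f where "f = nat \<lfloor>x\<rfloor>"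
  have fx: "int f = \<lfloor>x\<rfloor>" using x1 unfolding f_def by simp
  have f1: "f \<ge> 1" using x1 unfolding f_def by linarith
  have rf: "real f = real_of_int \<lfloor>x\<rfloor>" using fx by (metis of_int_of_nat_eq)
  have fle: "real f \<le> x" using rf by simp
  have flt: "x < real f + 1" using rf by linarith
  have step: "a (Suc k) = real (k+1) ^ (n-1) / fact k" for k
  proof -
    obtain p where p: "n = Suc p" using assms(1) by (cases n) auto
    have "real (Suc k) ^ n = real (Suc k) * real (Suc k) ^ (n-1)"
      unfolding p by simp
    then show ?thesis unfolding a_def by simp
  qed
  have cmp: "a k < a (Suc k) \<longleftrightarrow> real k ^ n < real (k+1) ^ (n-1)" for k
    unfolding step using fact_gt_zero[where 'a=real, of k] by (simp add: a_def divide_less_cancel)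
  have cmp2: "a (Suc k) < a k \<longleftrightarrow> real (k+1) ^ (n-1) < real k ^ n" for k
    unfolding step using fact_gt_zero[where 'a=real, of k] by (simp add: a_def divide_less_cancel)
  define m where "m = (if real f ^ n < real (f+1) ^ (n-1) then f + 1 else f)"
  have m1: "m \<ge> 1" using f1 unfolding m_def by simp
  have inc: "\<forall>k. 1 \<le> k \<and> k < m \<longrightarrow> a k < a (Suc k)"
  proof (intro allI impI)
    fix k assume k: "1 \<le> k \<and> k < m"
    show "a k < a (Suc k)"
    proof (cases "k < f")
      case True
      then have "k + 1 \<le> f" by simp
      then have "real (k + 1) \<le> real f" by (simp only: of_nat_le_iff)
      then have "real k \<le> x - 1" using fle by simp
      then show ?thesis unfolding cmp using up[OF assms(1) _ _ x_def wn(2)] k by simp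
    next
      case False
      then have "k = f" "real f ^ n < real (f+1) ^ (n-1)" using k unfolding m_def by (auto split: if_splits)
      then show ?thesis unfolding cmp by simp
    qed
  qed
  have dec: "\<forall>k\<ge>m. a (Suc k) < a k"
  proof (intro allI impI)
    fix k assume k: "m \<le> k"
    show "a (Suc k) < a k"
    proof (cases "k \<ge> f + 1")
      case True
      then have "real (f + 1) \<le> real k" by (simp only: of_nat_le_iff)
      then have "real k \<ge> x" using flt by simp
      then show ?thesis unfolding cmp2 using down[OF assms(1) _ x_def wn(2) wn(1)] by simp
    next
      case False
      then have "k = f" "\<not> real f ^ n < real (f+1) ^ (n-1)" using k f1 unfolding m_def by (auto split: if_splits)
      then show ?thesis unfolding cmp2 using neq_pow[OF f1 assms(1)] by simp
    qed
  qed
  have incle: "a i < a j" if "1 \<le> i" "i < j" "j \<le> m" for i j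
    using inc_seq[OF inc that(1), of "j - i - 1"] that by simp
  have decle: "a j < a i" if "m \<le> i" "i < j" for i j
    using dec_seq[OF dec that(1), of "j - i - 1"] that by simp
  have uni: "unimodal_seq a" unfolding unimodal_seq_def
  proof (intro exI[of _ m] conjI allI impI m1)
    fix i j assume "1 \<le> i \<and> i \<le> j \<and> j \<le> m" then show "a i \<le> a j"
      using incle[of i j] by (cases "i = j") auto
  next
    fix i j assume "m \<le> i \<and> i \<le> j" then show "a j \<le> a i"
      using decle[of i j] by (cases "i = j") auto
  qed
  have mx: "\<forall>j\<ge>1. j \<noteq> m \<longrightarrow> a j < a m"
  proof (intro allI impI)
    fix j assume "1 \<le> j" "j \<noteq> m"
    then show "a j < a m" using incle[of j m] decle[of m j] by (cases "j < m") auto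
  qed
  have loc: "int m = \<lfloor>x\<rfloor> \<or> int m = \<lfloor>x\<rfloor> + 1" using fx unfolding m_def by auto
  show ?thesis using uni mx loc m1 unfolding x_def w_def by blast
qed

end
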